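(* Let $k\in\mathbb{Z}$ and $\imath\in\mathbb{Z}_{>1}$. The rational polygon $\mathrm{conv}((0,0),(k+1/2,\imath),(k+4/5,\imath))$ contains no lattice point other than $(0,0)$ if and only if it is lattice equivalent to one of $\mathrm{conv}((0,0),(-1/2,\imath),(-1/5,\imath))$, $\mathrm{conv}((0,0),(1/2,\imath),(4/5,\imath))$, or, only when $\imath$ is even, $\mathrm{conv}((0,0),(\tfrac{\imath}{2}-\tfrac12,\imath),(\tfrac{\imath}{2}-\tfrac15,\imath))$.
   Context: Lattice equivalence means equivalence under maps $v\mapsto Av+w$ with $A\in\mathrm{GL}_2(\mathbb{Z})$ and $w\in\mathbb{Z}^2$. *)

theory Defs
  imports "HOL-Analysis.Analysis"
begin

definition lattice_point :: "real \<times> real \<Rightarrow> bool" where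
  "lattice_point p \<longleftrightarrow> fst p \<in> \<int> \<and> snd p \<in> \<int>"

definition int_affine_map ::
  "int \<Rightarrow> int \<Rightarrow> int \<Rightarrow> int \<Rightarrow> int \<Rightarrow> int \<Rightarrow> real \<times> real \<Rightarrow> real \<times> real" where
  "int_affine_map a b c d e f p =
     (of_int a * fst p + of_int b * snd p + of_int e,
      of_int c * fst p + of_int d * snd p + of_int f)"

definition lattice_equiv :: "(real \<times> real) set \<Rightarrow> (real \<times> real) set \<Rightarrow> bool" where
  "lattice_equiv P Q \<longleftrightarrow>
     (\<exists>a b c d e f. \<bar>a * d - b * c\<bar> = 1 \<and> int_affine_map a b c d e f ` P = Q)"

end

theory Submission
  imports Defs
begin

lemma tri_char:
  fixes a b h x y :: real
  assumes ab: "a < b" and h: "h > 0"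
  shows "(x, y) \<in> convex hull {(0,0), (a,h), (b,h)} \<longleftrightarrow>
         0 \<le> y \<and> y \<le> h \<and> a * y \<le> h * x \<and> h * x \<le> b * y"
proof
  assume "(x, y) \<in> convex hull {(0,0), (a,h), (b,h)}"
  then obtain u v where uv: "0 \<le> u" "0 \<le> v" "u + v \<le> 1"
    and e: "(x,y) = u *\<^sub>R (a,h) + v *\<^sub>R (b,h)"
    unfolding convex_hull_3_alt by auto
  from e have x: "x = u * a + v * b" and y: "y = u * h + v * h" by auto
  show "0 \<le> y \<and> y \<le> h \<and> a * y \<le> h * x \<and> h * x \<le> b * y"
  proof (intro conjI)
    show "0 \<le> y" unfolding y using uv h by simp
    have "(u+v)*h \<le> 1*h" using uv h by (intro mult_right_mono) auto
    then show "y \<le> h" unfolding y by (simp add: distrib_right)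
    have "a * y = u * a*h + v * a*h" using y by (simp add: algebra_simps)
    moreover have "v * a*h \<le> v * b*h" using uv h ab by (simp add: mult_right_mono mult_left_mono)
    ultimately show "a * y \<le> h * x" using x by (simp add: algebra_simps)
    have "b * y = u * b*h + v * b*h" using y by (simp add: algebra_simps)
    moreover have "u * a*h \<le> u * b*h" using uv h ab by (simp add: mult_right_mono mult_left_mono)
    ultimately show "h * x \<le> b * y" using x by (simp add: algebra_simps)
  qed
next
  assume A: "0 \<le> y \<and> y \<le> h \<and> a * y \<le> h * x \<and> h * x \<le> b * y"
  define v where "v = (h * x - a * y) / (h * (b-a))"
  define u where "u = (b * y - h * x) / (h * (b-a))"
  have pos: "h * (b-a) > 0" using ab h by simp
  have u0: "0 \<le> u" unfolding u_def using A pos by simp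
  have v0: "0 \<le> v" unfolding v_def using A pos by simp
  have "u + v = ((b * y - h * x) + (h * x - a * y)) / (h * (b-a))"
    unfolding u_def v_def by (simp only: add_divide_distrib)
  also have "\<dots> = (y * (b - a)) / (h * (b-a))" by (simp add: algebra_simps)
  also have "\<dots> = y / h" using ab by simp
  finally have uv: "u + v = y / h" .
  have le: "u + v \<le> 1" using uv A h by simp
  have "u * a + v * b = (a * (b * y - h * x) + b * (h * x - a * y)) / (h * (b-a))"
    unfolding u_def v_def by (simp only: add_divide_distrib times_divide_eq_right times_divide_eq_left mult.commute)
  also have "\<dots> = (x * h * (b - a)) / (h * (b-a))" by (simp add: algebra_simps)
  also have "\<dots> = x" using ab h by simp
  finally have ex: "u * a + v * b = x" .
  have ey: "u * h + v * h = y" using uv h by (simp add: field_simps)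
  have "(x,y) = (0,0) + u *\<^sub>R ((a,h) - (0,0)) + v *\<^sub>R ((b,h) - (0,0))"
    using ex ey by simp
  then show "(x, y) \<in> convex hull {(0,0), (a,h), (b,h)}"
    unfolding convex_hull_3_alt using u0 v0 le by blast
qed

definition QQ :: "int \<Rightarrow> int \<Rightarrow> int \<Rightarrow> int \<Rightarrow> bool" where
  "QQ i k X Y \<longleftrightarrow> (2*k+1)*Y \<le> 2*i*X \<and> 5*i*X \<le> (5*k+4)*Y"

definition PP :: "int \<Rightarrow> int \<Rightarrow> bool" where
  "PP i k \<longleftrightarrow> (\<exists>X Y. 1 \<le> Y \<and> Y \<le> i - 1 \<and> QQ i k X Y)"

lemma QQ_shift: "QQ i (k + m*i) (X + m*Y) Y = QQ i k X Y"
  unfolding QQ_def by (simp add: algebra_simps)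

lemma PP_shift: "PP i (k + m*i) = PP i k"
proof
  assume "PP i (k + m*i)"
  then obtain X Y where "1 \<le> Y" "Y \<le> i - 1" "QQ i (k + m*i) X Y" unfolding PP_def by blast
  moreover have "QQ i (k + m*i) X Y = QQ i k (X - m*Y) Y"
    using QQ_shift[of i k m "X - m*Y" Y] by simp
  ultimately show "PP i k" unfolding PP_def by blast
next
  assume "PP i k"
  then obtain X Y where "1 \<le> Y" "Y \<le> i - 1" "QQ i k X Y" unfolding PP_def by blast
  then show "PP i (k + m*i)" unfolding PP_def using QQ_shift[of i k m X Y] by blast
qed

lemma PP_mod: "PP i k = PP i (k mod i)"
  using PP_shift[of i "k mod i" "k div i"] by simp

lemma fam:
  fixes i r q :: int
  assumes q1: "q \<ge> 1" and D1: "2*q - 1 \<le> i - q*r" and D2: "q < i - q*r"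
    and E1: "2*(i - q*r) - q \<le> i"
  shows "PP i r"
proof -
  define D where "D = i - q*r"
  define E where "E = 2*D - q"
  have Epos: "E > 0" and qE: "q < E" using D2 q1 unfolding E_def D_def by auto
  define k where "k = i div E"
  have kE: "k*E \<le> i" unfolding k_def using Epos
    by (metis div_mult_mod_eq le_add_same_cancel1 pos_mod_sign mult.commute)
  have kE2: "i < (k+1)*E" unfolding k_def using Epos
    by (metis add.commute div_mult_mod_eq add_less_cancel_left distrib_right mult_1 pos_mod_bound)
  have k1: "k \<ge> 1"
  proof (rule ccontr)
    assume "\<not> k \<ge> 1"
    then have "(k+1)*E \<le> 1*E" using Epos by (intro mult_right_mono) auto
    then have "(k+1)*E \<le> E" by simp
    then show False using kE2 E1 unfolding E_def D_def by linarith
  qed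
  define X where "X = r + 1 - k"
  define Y where "Y = i - k*q"
  have "k*q < k*E" using k1 qE by simp
  then have Y1: "1 \<le> Y" unfolding Y_def using kE by linarith
  have "k*q \<ge> 1*1" using k1 q1 by (intro mult_mono) auto  
  then have Y2: "Y \<le> i - 1" unfolding Y_def by linarith
  have e1: "2*i*X - (2*r+1)*Y = i - k*E" unfolding X_def Y_def E_def D_def
    by (simp add: algebra_simps)
  have e2: "(5*r+4)*Y - 5*i*X = k*(5*D - 4*q) - i" unfolding X_def Y_def E_def D_def
    by (simp add: algebra_simps)
  have e3: "k*(5*D - 4*q) - (k+1)*E + 1 = (3*k-2)*(D-2*q+1) + 3*((k-1)*(q-1))"
    unfolding E_def by (simp add: algebra_simps)
  have "(3*k-2)*(D-2*q+1) \<ge> 0" using k1 D1 unfolding D_def by simp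
  moreover have "(k-1)*(q-1) \<ge> 0" using k1 q1 by simp
  ultimately have "k*(5*D - 4*q) - (k+1)*E + 1 \<ge> 0" using e3 by linarith
  then have "(5*r+4)*Y - 5*i*X \<ge> 0" using e2 kE2 by linarith
  moreover have "2*i*X - (2*r+1)*Y \<ge> 0" using e1 kE by linarith
  ultimately have "QQ i r X Y" unfolding QQ_def by linarith
  then show ?thesis unfolding PP_def using Y1 Y2 by blast
qed

lemma core:
  fixes i r :: int
  assumes r1: "1 \<le> r" and r2: "r \<le> i - 2" and ne: "2*r + 2 \<noteq> i"
  shows "PP i r"
proof -
  consider "2*r+1 \<ge> i" | "2*r+3 \<le> i" "i \<le> 4*r+2" | "4*r+3 \<le> i" "r \<ge> 2" | "r = 1" "i \<ge> 7"
    using r1 ne by linarith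
  then show ?thesis
  proof cases
    case 1
    show ?thesis by (rule fam[of 1]) (use 1 r2 in auto)
  next
    case 2
    show ?thesis by (rule fam[of 2]) (use 2 in auto)
  next
    case 3
    define q where "q = (i + 2*r) div (2*r+1)"
    have p: "2*r+1 > 0" using r1 by simp
    have a1: "q*(2*r+1) \<le> i + 2*r" unfolding q_def using p
      by (metis div_mult_mod_eq le_add_same_cancel1 pos_mod_sign mult.commute)
    have "i + 2*r < (q+1)*(2*r+1)" unfolding q_def using p
      by (metis add.commute div_mult_mod_eq add_less_cancel_left distrib_right mult_1 pos_mod_bound)
    then have a2: "i \<le> q*(2*r+1)" by (simp add: algebra_simps)
    have q2: "q \<ge> 2"
    proof (rule ccontr)
      assume "\<not> q \<ge> 2"
      then have "q \<le> 1" by simp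
      then have "q*(2*r+1) \<le> 1*(2*r+1)" using p by (intro mult_right_mono) auto
      then have "q*(2*r+1) \<le> 2*r+1" by simp
      then show False using a2 3 by linarith
    qed
    have "(i+1)*(2*r+1) - (i+2*r)*(r+2) = (i - (4*r+3))*(r-1) + (2*r+1)*(r-2)"
      by (simp add: algebra_simps)
    moreover have "(i - (4*r+3))*(r-1) \<ge> 0" using 3 by simp
    moreover have "(2*r+1)*(r-2) \<ge> 0" using 3 by simp
    ultimately have b1: "(i+2*r)*(r+2) \<le> (i+1)*(2*r+1)" by linarith
    have "q*(2*r+1)*(r+2) \<le> (i+2*r)*(r+2)" using a1 3 by (intro mult_right_mono) auto
    with b1 have "(2*r+1)*(q*(r+2)) \<le> (2*r+1)*(i+1)" by (simp add: algebra_simps)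
    then have b2: "q*(r+2) \<le> i+1" using p by simp
    show ?thesis
    proof (rule fam[of q])
      show "1 \<le> q" using q2 by simp
      show "2*q - 1 \<le> i - q*r" using b2 by (simp add: algebra_simps)
      then show "q < i - q*r" using q2 by linarith
      show "2*(i - q*r) - q \<le> i" using a2 by (simp add: algebra_simps)
    qed
  next
    case 4
    define Y where "Y = (2*i) div 3"
    have a1: "3*Y \<le> 2*i" unfolding Y_def by simp
    have a2: "2*i < 3*Y + 3" unfolding Y_def by linarith
    have "QQ i r 1 Y" unfolding QQ_def using 4 a1 a2 by simp
    moreover have "1 \<le> Y" "Y \<le> i - 1" using a1 a2 4 by linarith+
    ultimately show ?thesis unfolding PP_def by blast
  qed
qed

lemma notPP0: "i > 1 \<Longrightarrow> \<not> PP i 0"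
proof
  assume i: "i > 1" and "PP i 0"
  then obtain X Y where Y: "1 \<le> Y" "Y \<le> i - 1" and q: "Y \<le> 2*i*X" "5*i*X \<le> 4*Y"
    unfolding PP_def QQ_def by auto
  show False
  proof (cases "X \<ge> 1")
    case True
    then have "i*1 \<le> i*X" using i by (intro mult_left_mono) auto
    then show False using q Y by linarith
  next
    case False
    then have "i*X \<le> i*0" using i by (intro mult_left_mono) auto
    then show False using q Y by linarith
  qed
qed

lemma notPP1: "i > 1 \<Longrightarrow> \<not> PP i (i - 1)"
proof
  assume i: "i > 1" and "PP i (i - 1)"
  then obtain X Y where Y: "1 \<le> Y" "Y \<le> i - 1" and q: "(2*(i-1)+1)*Y \<le> 2*i*X" "5*i*X \<le> (5*(i-1)+4)*Y"
    unfolding PP_def QQ_def by auto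
  have e1: "2*i*(X - Y) \<ge> - Y" using q(1) by (simp add: algebra_simps)
  have e2: "5*i*(X - Y) \<le> - Y" using q(2) by (simp add: algebra_simps)
  show False
  proof (cases "X - Y \<ge> 0")
    case True
    then have "5*i*0 \<le> 5*i*(X-Y)" using i by (intro mult_left_mono) auto
    then show False using e2 Y by linarith
  next
    case False
    then have "2*i*(X-Y) \<le> 2*i*(-1)" using i by (intro mult_left_mono) auto
    then show False using e1 Y by linarith
  qed
qed

lemma notPP2: "i > 1 \<Longrightarrow> 2*r + 2 = i \<Longrightarrow> \<not> PP i r"
proof
  assume i: "i > 1" and ir: "2*r + 2 = i" and "PP i r"
  then obtain X Y where Y: "1 \<le> Y" "Y \<le> i - 1" and q: "(2*r+1)*Y \<le> 2*i*X" "5*i*X \<le> (5*r+4)*Y"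
    unfolding PP_def QQ_def by auto
  have "i*(2*X - Y) = 2*i*X - (2*r+1)*Y - Y" by (simp add: ir[symmetric] algebra_simps)
  then have e1: "i*(2*X - Y) \<ge> - Y" using q(1) by linarith
  have "5*i*(2*X - Y) = 2*(5*i*X) - (10*r+10)*Y" by (simp add: ir[symmetric] algebra_simps)
  then have e2: "5*i*(2*X - Y) \<le> - 2*Y" using q(2) by (simp add: algebra_simps)
  show False
  proof (cases "2*X - Y \<ge> 0")
    case True
    then have "5*i*0 \<le> 5*i*(2*X - Y)" using i by (intro mult_left_mono) auto
    then show False using e2 Y by linarith
  next
    case False
    then have "i*(2*X-Y) \<le> i*(-1)" using i by (intro mult_left_mono) auto
    then show False using e1 Y by linarith
  qed
qed

lemma classify:
  assumes i: "i > 1"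
  shows "\<not> PP i k \<longleftrightarrow> (k mod i = 0 \<or> k mod i = i - 1 \<or> 2*(k mod i) + 2 = i)"
proof -
  have "PP i k = PP i (k mod i)" by (rule PP_mod)
  moreover have "0 \<le> k mod i" "k mod i < i" using i by auto
  ultimately show ?thesis using core[of "k mod i" i] notPP0[OF i] notPP1[OF i] notPP2[OF i]
    by fastforce
qed


definition Tri :: "int \<Rightarrow> int \<Rightarrow> (real \<times> real) set" where
  "Tri i k = convex hull {(0, 0), (of_int k + 1/2, of_int i), (of_int k + 4/5, of_int i)}"

lemma conv1: "(of_int k + 1/2) * (of_int Y::real) \<le> of_int i * of_int X \<longleftrightarrow> (2*k+1)*Y \<le> 2*i*X"
proof -
  have "(2*k+1)*Y \<le> 2*i*X \<longleftrightarrow> real_of_int ((2*k+1)*Y) \<le> real_of_int (2*i*X)"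
    by (simp only: of_int_le_iff)
  also have "\<dots> \<longleftrightarrow> (of_int k + 1/2) * (of_int Y::real) \<le> of_int i * of_int X"
    by (simp add: field_simps)
  finally show ?thesis by simp
qed

lemma conv2: "of_int i * of_int X \<le> (of_int k + 4/5) * (of_int Y::real) \<longleftrightarrow> 5*i*X \<le> (5*k+4)*Y"
proof -
  have "5*i*X \<le> (5*k+4)*Y \<longleftrightarrow> real_of_int (5*i*X) \<le> real_of_int ((5*k+4)*Y)"
    by (simp only: of_int_le_iff)
  also have "\<dots> \<longleftrightarrow> of_int i * of_int X \<le> (of_int k + 4/5) * (of_int Y::real)"
    by (simp add: field_simps)
  finally show ?thesis by simp
qed

lemma tri_lattice:
  assumes i: "i > 0"
  shows "(of_int X, of_int Y) \<in> Tri i k \<longleftrightarrow> 0 \<le> Y \<and> Y \<le> i \<and> QQ i k X Y"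
proof -
  have "(of_int X, of_int Y) \<in> Tri i k \<longleftrightarrow>
     0 \<le> real_of_int Y \<and> real_of_int Y \<le> of_int i \<and>
     (of_int k + 1/2) * (of_int Y::real) \<le> of_int i * of_int X \<and> of_int i * of_int X \<le> (of_int k + 4/5) * (of_int Y::real)"
    unfolding Tri_def using i by (intro tri_char) auto
  then show ?thesis unfolding QQ_def conv1 conv2 by simp
qed

lemma tri_LF:
  assumes i: "i > 1"
  shows "Tri i k \<inter> {p. lattice_point p} = {(0,0)} \<longleftrightarrow> \<not> PP i k"
proof
  have ip: "i > 0" using i by simp
  assume A: "Tri i k \<inter> {p. lattice_point p} = {(0,0)}"
  show "\<not> PP i k"
  proof
    assume "PP i k"
    then obtain X Y where Y: "1 \<le> Y" "Y \<le> i - 1" "QQ i k X Y" unfolding PP_def by blast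
    have "0 \<le> Y \<and> Y \<le> i \<and> QQ i k X Y" using Y by simp
    then have "(of_int X, of_int Y) \<in> Tri i k" using tri_lattice[OF ip, of X Y k] by blast
    moreover have "lattice_point (of_int X, of_int Y)" unfolding lattice_point_def by simp
    ultimately have "(real_of_int X, real_of_int Y) \<in> Tri i k \<inter> {p. lattice_point p}" by blast
    then have "(real_of_int X, real_of_int Y) = (0,0)" using A by blast
    then have "Y = 0" by simp
    then show False using Y by simp
  qed
next
  assume N: "\<not> PP i k"
  have ip: "i > 0" using i by simp
  have z: "(0,0) \<in> Tri i k" unfolding Tri_def by (rule hull_inc) simp
  have "p = (0,0)" if p: "p \<in> Tri i k" "lattice_point p" for p
  proof -
    have "fst p \<in> \<int>" "snd p \<in> \<int>" using p(2) unfolding lattice_point_def by auto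
    then obtain X Y where X: "fst p = of_int X" and Y: "snd p = of_int Y" by (metis Ints_cases)
    have pe: "p = (of_int X, of_int Y)" using X Y by (metis prod.collapse)
    have c: "0 \<le> Y \<and> Y \<le> i \<and> QQ i k X Y" using p(1) tri_lattice[OF ip, of X Y k] pe by simp
    then have q1: "(2*k+1)*Y \<le> 2*i*X" and q2: "5*i*X \<le> (5*k+4)*Y" unfolding QQ_def by auto
    consider "Y = 0" | "Y = i" | "1 \<le> Y \<and> Y \<le> i - 1" using c by linarith
    then show ?thesis
    proof cases
      case 1
      then have "0 \<le> i*X" "i*X \<le> 0" using q1 q2 by auto
      then have "i*X = 0" by simp
      then have "X = 0" using ip by simp
      then show ?thesis using pe 1 by simp
    next
      case 2
      have a: "i*(2*k+1) \<le> i*(2*X)" using q1 2 by (simp add: algebra_simps)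
      have b: "i*(5*X) \<le> i*(5*k+4)" using q2 2 by (simp add: algebra_simps)
      have a2: "2*k+1 \<le> 2*X" using a ip by simp
      have b2: "5*X \<le> 5*k+4" using b ip by simp
      have "X \<ge> k+1"
      proof (rule ccontr)
        assume "\<not> X \<ge> k+1"
        then have "X \<le> k" by simp
        then show False using a2 by linarith
      qed
      then have False using b2 by linarith
      then show ?thesis ..
    next
      case 3
      then have "PP i k" unfolding PP_def using c by blast
      then show ?thesis using N by simp
    qed
  qed
  note H = this
  have L0: "lattice_point (0::real,0::real)" unfolding lattice_point_def by simp
  show "Tri i k \<inter> {p. lattice_point p} = {(0,0)}"
  proof (intro equalityI subsetI)
    fix p assume "p \<in> Tri i k \<inter> {p. lattice_point p}"
    then have "p = (0,0)" using H by blast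
    then show "p \<in> {(0,0)}" by simp
  next
    fix p :: "real \<times> real" assume "p \<in> {(0,0)}"
    then have "p = (0,0)" by simp
    then show "p \<in> Tri i k \<inter> {p. lattice_point p}" using z L0 by simp
  qed
qed

lemma shear_linear: "linear (int_affine_map 1 (-m) 0 1 0 0)"
  by (rule linearI) (auto simp: int_affine_map_def algebra_simps)

lemma shear_img: "int_affine_map 1 (-m) 0 1 0 0 ` Tri i k = Tri i (k - m*i)"
  unfolding Tri_def convex_hull_linear_image[OF shear_linear]
  by (simp add: int_affine_map_def algebra_simps)

lemma shear_equiv: "lattice_equiv (Tri i k) (Tri i (k - m*i))"
  unfolding lattice_equiv_def using shear_img[of m i k]
  by (intro exI[of _ 1] exI[of _ "-m"] exI[of _ 0] exI[of _ 1] exI[of _ 0] exI[of _ 0]) simp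

lemma equiv_LF:
  assumes E: "lattice_equiv P Q" and LQ: "Q \<inter> {p. lattice_point p} = {(0,0)}"
    and z: "(0,0) \<in> P"
  shows "P \<inter> {p. lattice_point p} = {(0,0)}"
proof -
  obtain a b c d e f where det: "\<bar>a * d - b * c\<bar> = 1" and img: "int_affine_map a b c d e f ` P = Q"
    using E unfolding lattice_equiv_def by blast
  let ?F = "int_affine_map a b c d e f"
  have latF: "lattice_point (?F p)" if "lattice_point p" for p
    using that unfolding lattice_point_def int_affine_map_def
    by (auto intro!: Ints_add Ints_mult)
  have F0: "?F p = (0,0)" if "p \<in> P" "lattice_point p" for p
    using that latF img LQ by blast
  have "p = (0,0)" if p: "p \<in> P" "lattice_point p" for p
  proof -
    have "lattice_point (0::real,0::real)" unfolding lattice_point_def by simp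
    then have "?F (0,0) = (0,0)" using F0 z by blast
    then have ef: "real_of_int e = 0" "real_of_int f = 0" unfolding int_affine_map_def by auto
    obtain x y where xy: "p = (x,y)" by (cases p)
    have "?F p = (0,0)" using F0 p by blast
    then have h1: "of_int a * x + of_int b * y = 0" and h2: "of_int c * x + of_int d * y = 0"
      using ef xy unfolding int_affine_map_def by auto
    have dn: "real_of_int (a*d - b*c) \<noteq> 0"
    proof
      assume "real_of_int (a*d - b*c) = 0"
      then have "a*d - b*c = 0" by (simp only: of_int_eq_0_iff)
      then show False using det by simp
    qed
    have "real_of_int (a*d - b*c) * x = of_int d * (of_int a * x + of_int b * y) - of_int b * (of_int c * x + of_int d * y)"
      by (simp add: algebra_simps)
    then have "real_of_int (a*d - b*c) * x = 0" using h1 h2 by simp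
    then have x0: "x = 0" using dn by simp
    have "real_of_int (a*d - b*c) * y = of_int a * (of_int c * x + of_int d * y) - of_int c * (of_int a * x + of_int b * y)"
      by (simp add: algebra_simps)
    then have "real_of_int (a*d - b*c) * y = 0" using h1 h2 by simp
    then have y0: "y = 0" using dn by simp
    show ?thesis using xy x0 y0 by simp
  qed
  note H = this
  have L0: "lattice_point (0::real,0::real)" unfolding lattice_point_def by simp
  show ?thesis
  proof (intro equalityI subsetI)
    fix p assume "p \<in> P \<inter> {p. lattice_point p}"
    then have "p = (0,0)" using H by blast
    then show "p \<in> {(0,0)}" by simp
  next
    fix p :: "real \<times> real" assume "p \<in> {(0,0)}"
    then have "p = (0,0)" by simp
    then show "p \<in> P \<inter> {p. lattice_point p}" using z L0 by simp
  qed
qed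

lemma main_tri:
  fixes k i :: int
  assumes i: "i > 1"
  shows "(Tri i k \<inter> {p. lattice_point p} = {(0,0)}) \<longleftrightarrow>
     (lattice_equiv (Tri i k) (Tri i (-1)) \<or> lattice_equiv (Tri i k) (Tri i 0)
      \<or> (even i \<and> lattice_equiv (Tri i k) (Tri i (i div 2 - 1))))"
proof
  assume "Tri i k \<inter> {p. lattice_point p} = {(0,0)}"
  then have "\<not> PP i k" using tri_LF[OF i] by simp
  then have cl: "k mod i = 0 \<or> k mod i = i - 1 \<or> 2*(k mod i) + 2 = i" using classify[OF i] by simp
  have km: "k = k mod i + (k div i) * i" by simp
  show "lattice_equiv (Tri i k) (Tri i (-1)) \<or> lattice_equiv (Tri i k) (Tri i 0)
      \<or> (even i \<and> lattice_equiv (Tri i k) (Tri i (i div 2 - 1)))"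
  proof -
    { assume h: "k mod i = 0"
      have "k - (k div i) * i = 0" using km h by linarith
      then have "lattice_equiv (Tri i k) (Tri i 0)" using shear_equiv[of i k "k div i"] by simp }
    moreover
    { assume h: "k mod i = i - 1"
      have "k - (k div i + 1) * i = -1" using km h by (simp add: algebra_simps)
      then have "lattice_equiv (Tri i k) (Tri i (-1))" using shear_equiv[of i k "k div i + 1"] by simp }
    moreover
    { assume h: "2*(k mod i) + 2 = i"
      have i2: "i = 2*(k mod i + 1)" using h by simp
      then have ev: "even i" by (metis dvd_triv_left)
      have "i div 2 = k mod i + 1" using i2 by simp
      then have "k - (k div i) * i = i div 2 - 1" using km by linarith
      then have "lattice_equiv (Tri i k) (Tri i (i div 2 - 1))" using shear_equiv[of i k "k div i"] by simp
      with ev have "even i \<and> lattice_equiv (Tri i k) (Tri i (i div 2 - 1))" by simp }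
    ultimately show ?thesis using cl by blast
  qed
next
  have ip: "i > 0" using i by simp
  have z: "(0,0) \<in> Tri i k" using tri_lattice[OF ip, of 0 0 k] ip unfolding QQ_def by simp
  have m1: "(-1::int) mod i = i - 1" using i by (simp add: zmod_minus1)
  have "\<not> PP i (-1)" using classify[OF i, of "-1"] m1 by simp
  then have L1: "Tri i (-1) \<inter> {p. lattice_point p} = {(0,0)}"
    using tri_LF[OF i, of "-1"] by simp
  have "\<not> PP i 0" using classify[OF i, of 0] by simp
  then have L2: "Tri i 0 \<inter> {p. lattice_point p} = {(0,0)}"
    using tri_LF[OF i, of 0] by simp
  have L3: "Tri i (i div 2 - 1) \<inter> {p. lattice_point p} = {(0,0)}" if ev: "even i"
  proof -
    have m: "(i div 2 - 1) mod i = i div 2 - 1" using i by (intro mod_pos_pos_trivial) auto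
    have "2*(i div 2 - 1) + 2 = i" using ev by auto
    then have "\<not> PP i (i div 2 - 1)" using classify[OF i, of "i div 2 - 1"] m by simp
    then show ?thesis using tri_LF[OF i, of "i div 2 - 1"] by simp
  qed
  assume "lattice_equiv (Tri i k) (Tri i (-1)) \<or> lattice_equiv (Tri i k) (Tri i 0)
      \<or> (even i \<and> lattice_equiv (Tri i k) (Tri i (i div 2 - 1)))"
  then show "Tri i k \<inter> {p. lattice_point p} = {(0,0)}"
  proof (elim disjE conjE)
    assume "lattice_equiv (Tri i k) (Tri i (-1))"
    then show ?thesis using equiv_LF[OF _ L1 z] by simp
  next
    assume "lattice_equiv (Tri i k) (Tri i 0)"
    then show ?thesis using equiv_LF[OF _ L2 z] by simp
  next
    assume "even i" "lattice_equiv (Tri i k) (Tri i (i div 2 - 1))"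
    then show ?thesis using equiv_LF[OF _ L3 z] by simp
  qed
qed

theorem mainTheorem13:
  fixes k i :: int
  assumes "i > 1"
  shows "(convex hull {(0, 0), (of_int k + 1/2, of_int i), (of_int k + 4/5, of_int i)}
            \<inter> {p. lattice_point p} = {(0::real, 0::real)})
     \<longleftrightarrow>
     (lattice_equiv (convex hull {(0, 0), (of_int k + 1/2, of_int i), (of_int k + 4/5, of_int i)})
                    (convex hull {(0, 0), (-1/2, of_int i), (-1/5, of_int i)})
      \<or> lattice_equiv (convex hull {(0, 0), (of_int k + 1/2, of_int i), (of_int k + 4/5, of_int i)})
                    (convex hull {(0, 0), (1/2, of_int i), (4/5, of_int i)})
      \<or> (even i \<and>
         lattice_equiv (convex hull {(0, 0), (of_int k + 1/2, of_int i), (of_int k + 4/5, of_int i)})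
                    (convex hull {(0, 0), (of_int i / 2 - 1/2, of_int i), (of_int i / 2 - 1/5, of_int i)})))"
proof -
  have t1: "convex hull {(0, 0), (-1/2, of_int i), (-1/5, of_int i)} = Tri i (-1)"
    unfolding Tri_def by (simp add: algebra_simps)
  have t2: "convex hull {(0, 0), (1/2, of_int i), (4/5, of_int i)} = Tri i 0"
    unfolding Tri_def by simp
  have t3: "convex hull {(0, 0), (of_int i / 2 - 1/2, of_int i), (of_int i / 2 - 1/5, of_int i)} = Tri i (i div 2 - 1)"
    if ev: "even i"
  proof -
    obtain h where h: "i = 2*h" using ev by blast
    have "i div 2 - 1 = h - 1" using h by simp
    then show ?thesis unfolding Tri_def using h by (simp add: algebra_simps)
  qed
  show ?thesis
  proof (cases "even i")
    case True
    show ?thesis using main_tri[OF assms, of k] t1 t2 t3[OF True] True unfolding Tri_def[of i k] by simp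
  next
    case False
    show ?thesis using main_tri[OF assms, of k] t1 t2 False unfolding Tri_def[of i k] by simp
  qed
qed

end
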